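(* For $n\ge2$, there is a well-defined surjective homomorphism $\psi_P:TVP_n\to A_n$ with $\psi_P(\lambda_{kl})=e$ for all $1\le k\ne l\le n$ and $\psi_P(\gamma_j)=\gamma_j$ for $1\le j\le n$, which restricts to the identity on $A_n$. Consequently, with $PL_n=\ker\psi_P$, one has $TVP_n=PL_n\rtimes A_n$.
   Context: For $n\ge 2$, the twisted virtual braid group $TVB_n$ is the group with generators $\sigma_1,\dots,\sigma_{n-1}$, $\rho_1,\dots,\rho_{n-1}$, $\gamma_1,\dots,\gamma_n$ and defining relations: $\sigma_i\sigma_{i+1}\sigma_i=\sigma_{i+1}\sigma_i\sigma_{i+1}$ ($1\le i\le n-2$); $\sigma_i\sigma_j=\sigma_j\sigma_i$ ($|i-j|\ge 2$); $\rho_i^2=1$; $\rho_i\rho_j=\rho_j\rho_i$ ($|i-j|\ge2$); $\rho_i\rho_{i+1}\rho_i=\rho_{i+1}\rho_i\rho_{i+1}$ ($1\le i\le n-2$); $\sigma_i\rho_j=\rho_j\sigma_i$ ($|i-j|\ge 2$); $\rho_i\rho_{i+1}\sigma_i=\sigma_{i+1}\rho_i\rho_{i+1}$ ($1\le i\le n-2$); $\gamma_i^2=1$ and $\gamma_i\gamma_j=\gamma_j\gamma_i$ (all $i,j$); $\gamma_j\rho_i=\rho_i\gamma_j$ and $\gamma_j\sigma_i=\sigma_i\gamma_j$ for $j\notin\{i,i+1\}$; $\rho_i\gamma_i=\gamma_{i+1}\rho_i$ ($1\le i\le n-1$); $\rho_i\sigma_i\rho_i=\gamma_{i+1}\gamma_i\sigma_i\gamma_i\gamma_{i+1}$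 ($1\le i\le n-1$). $\varphi_P:TVB_n\to S_n$ is the homomorphism with $\sigma_i\mapsto(i,i+1)$, $\rho_i\mapsto(i,i+1)$, $\gamma_j\mapsto e$, and $TVP_n=\ker\varphi_P$. $A_n=\langle\gamma_1,\dots,\gamma_n\rangle\le TVP_n$. In $TVB_n$ define $\lambda_{i,i+1}=\rho_i\sigma_i^{-1}$, $\lambda_{i+1,i}=\rho_i\lambda_{i,i+1}\rho_i$ ($1\le i\le n-1$), and for $1\le i<j-1\le n-1$: $\lambda_{ij}=\rho_{j-1}\cdots\rho_{i+1}\lambda_{i,i+1}\rho_{i+1}\cdots\rho_{j-1}$, $\lambda_{ji}=\rho_{j-1}\cdots\rho_{i+1}\lambda_{i+1,i}\rho_{i+1}\cdots\rho_{j-1}$. The elements $\lambda_{kl}$ and $\gamma_j$ generate $TVP_n$. *)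

theory Defs
  imports "HOL-Algebra.Algebra"
begin

datatype gen = Sg nat | Rh nat | Ga nat

type_synonym letter = "bool \<times> gen"   (* True = generator, False = its inverse *)
type_synonym word = "letter list"

definition pos :: "gen \<Rightarrow> letter" where "pos x = (True, x)"

definition inv_letter :: "letter \<Rightarrow> letter" where
  "inv_letter l = (\<not> fst l, snd l)"

definition inv_word :: "word \<Rightarrow> word" where
  "inv_word w = rev (map inv_letter w)"

definition gens :: "nat \<Rightarrow> gen set" where
  "gens n = {Sg i | i. 1 \<le> i \<and> i \<le> n - 1} \<union> {Rh i | i. 1 \<le> i \<and> i \<le> n - 1}
          \<union> {Ga j | j. 1 \<le> j \<and> j \<le> n}"

definition letters :: "nat \<Rightarrow> letter set" where
  "letters n = {l. snd l \<in> gens n}"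

definition rel :: "word \<Rightarrow> word \<Rightarrow> word" where
  "rel u v = u @ inv_word v"

definition relators :: "nat \<Rightarrow> word set" where
  "relators n =
     {rel (map pos [Sg i, Sg (i+1), Sg i]) (map pos [Sg (i+1), Sg i, Sg (i+1)]) | i. 1 \<le> i \<and> i \<le> n - 2}
   \<union> {rel (map pos [Sg i, Sg j]) (map pos [Sg j, Sg i]) | i j.
        1 \<le> i \<and> i \<le> n - 1 \<and> 1 \<le> j \<and> j \<le> n - 1 \<and> (i + 2 \<le> j \<or> j + 2 \<le> i)}
   \<union> {rel (map pos [Rh i, Rh i]) [] | i. 1 \<le> i \<and> i \<le> n - 1}
   \<union> {rel (map pos [Rh i, Rh j]) (map pos [Rh j, Rh i]) | i j.
        1 \<le> i \<and> i \<le> n - 1 \<and> 1 \<le> j \<and> j \<le> n - 1 \<and> (i + 2 \<le> j \<or> j + 2 \<le> i)}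
   \<union> {rel (map pos [Rh i, Rh (i+1), Rh i]) (map pos [Rh (i+1), Rh i, Rh (i+1)]) | i. 1 \<le> i \<and> i \<le> n - 2}
   \<union> {rel (map pos [Sg i, Rh j]) (map pos [Rh j, Sg i]) | i j.
        1 \<le> i \<and> i \<le> n - 1 \<and> 1 \<le> j \<and> j \<le> n - 1 \<and> (i + 2 \<le> j \<or> j + 2 \<le> i)}
   \<union> {rel (map pos [Rh i, Rh (i+1), Sg i]) (map pos [Sg (i+1), Rh i, Rh (i+1)]) | i. 1 \<le> i \<and> i \<le> n - 2}
   \<union> {rel (map pos [Ga i, Ga i]) [] | i. 1 \<le> i \<and> i \<le> n}
   \<union> {rel (map pos [Ga i, Ga j]) (map pos [Ga j, Ga i]) | i j. 1 \<le> i \<and> i \<le> n \<and> 1 \<le> j \<and> j \<le> n}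
   \<union> {rel (map pos [Ga j, Rh i]) (map pos [Rh i, Ga j]) | i j.
        1 \<le> i \<and> i \<le> n - 1 \<and> 1 \<le> j \<and> j \<le> n \<and> j \<noteq> i \<and> j \<noteq> i + 1}
   \<union> {rel (map pos [Ga j, Sg i]) (map pos [Sg i, Ga j]) | i j.
        1 \<le> i \<and> i \<le> n - 1 \<and> 1 \<le> j \<and> j \<le> n \<and> j \<noteq> i \<and> j \<noteq> i + 1}
   \<union> {rel (map pos [Rh i, Ga i]) (map pos [Ga (i+1), Rh i]) | i. 1 \<le> i \<and> i \<le> n - 1}
   \<union> {rel (map pos [Rh i, Sg i, Rh i]) (map pos [Ga (i+1), Ga i, Sg i, Ga i, Ga (i+1)]) | i. 1 \<le> i \<and> i \<le> n - 1}"

inductive eqv :: "nat \<Rightarrow> word \<Rightarrow> word \<Rightarrow> bool" for n where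
  refl: "set w \<subseteq> letters n \<Longrightarrow> eqv n w w"
| sym: "eqv n u v \<Longrightarrow> eqv n v u"
| trans: "eqv n u v \<Longrightarrow> eqv n v w \<Longrightarrow> eqv n u w"
| cancel: "set u \<subseteq> letters n \<Longrightarrow> set v \<subseteq> letters n \<Longrightarrow> x \<in> letters n \<Longrightarrow>
           eqv n (u @ [x, inv_letter x] @ v) (u @ v)"
| relator: "set u \<subseteq> letters n \<Longrightarrow> set v \<subseteq> letters n \<Longrightarrow> r \<in> relators n \<Longrightarrow>
           eqv n (u @ r @ v) (u @ v)"

definition cls :: "nat \<Rightarrow> word \<Rightarrow> word set" where
  "cls n w = {v. eqv n w v}"

definition TVB :: "nat \<Rightarrow> word set monoid" where
  "TVB n = \<lparr> carrier = {cls n w | w. set w \<subseteq> letters n},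
             Group.monoid.mult = (\<lambda>A B. {w. \<exists>a\<in>A. \<exists>b\<in>B. eqv n (a @ b) w}),
             Group.monoid.one = cls n [] \<rparr>"

definition transp :: "nat \<Rightarrow> nat \<Rightarrow> nat" where
  "transp i k = (if k = i then i + 1 else if k = i + 1 then i else k)"

fun perm_letter :: "letter \<Rightarrow> nat \<Rightarrow> nat" where
  "perm_letter (b, Sg i) = transp i"
| "perm_letter (b, Rh i) = transp i"
| "perm_letter (b, Ga j) = id"

definition perm_word :: "word \<Rightarrow> nat \<Rightarrow> nat" where
  "perm_word w = foldr (\<circ>) (map perm_letter w) id"

definition phiP :: "nat \<Rightarrow> word set \<Rightarrow> nat \<Rightarrow> nat" where
  "phiP n c = perm_word (SOME w. w \<in> c)"

definition TVP :: "nat \<Rightarrow> word set set" where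
  "TVP n = kernel (TVB n) (sym_group n) (phiP n)"

definition gam :: "nat \<Rightarrow> nat \<Rightarrow> word set" where
  "gam n j = cls n [pos (Ga j)]"

definition A :: "nat \<Rightarrow> word set set" where
  "A n = generate (TVB n) {gam n j | j. 1 \<le> j \<and> j \<le> n}"

text \<open>lambda_{i,i+1} = rho_i sigma_i^{-1}, lambda_{i+1,i} = rho_i lambda_{i,i+1} rho_i.\<close>
definition lam_up :: "nat \<Rightarrow> word" where
  "lam_up i = [(True, Rh i), (False, Sg i)]"

definition lam_down :: "nat \<Rightarrow> word" where
  "lam_down i = [pos (Rh i)] @ lam_up i @ [pos (Rh i)]"

definition rho_desc :: "nat \<Rightarrow> nat \<Rightarrow> word" where
  "rho_desc i j = map (\<lambda>k. pos (Rh k)) (rev [i+1..<j])"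

definition lam_word :: "nat \<Rightarrow> nat \<Rightarrow> word" where
  "lam_word k l = (if k < l then rho_desc k l @ lam_up k @ rev (rho_desc k l)
                   else rho_desc l k @ lam_down l @ rev (rho_desc l k))"

definition lam :: "nat \<Rightarrow> nat \<Rightarrow> nat \<Rightarrow> word set" where
  "lam n k l = cls n (lam_word k l)"

end

theory Submission
  imports Defs
begin


lemma inv_letter_letters[simp]: "inv_letter x \<in> letters n \<longleftrightarrow> x \<in> letters n"
  by (simp add: inv_letter_def letters_def)

lemma inv_letter_inv[simp]: "inv_letter (inv_letter x) = x"
  by (simp add: inv_letter_def)

lemma inv_word_letters[simp]: "set (inv_word w) \<subseteq> letters n \<longleftrightarrow> set w \<subseteq> letters n"
  by (auto simp add: inv_word_def)

lemma inv_word_inv[simp]: "inv_word (inv_word w) = w"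
  by (simp add: inv_word_def rev_map comp_def)

lemma gens_simps[simp]:
  "Sg i \<in> gens n \<longleftrightarrow> 1 \<le> i \<and> i \<le> n - 1"
  "Rh i \<in> gens n \<longleftrightarrow> 1 \<le> i \<and> i \<le> n - 1"
  "Ga i \<in> gens n \<longleftrightarrow> 1 \<le> i \<and> i \<le> n"
  by (auto simp: gens_def)

lemma letters_simp: "(b, g) \<in> letters n \<longleftrightarrow> g \<in> gens n"
  by (simp add: letters_def)

lemma relators_letters: "r \<in> relators n \<Longrightarrow> set r \<subseteq> letters n"
  unfolding relators_def rel_def
  by (auto simp: inv_word_def inv_letter_def pos_def letters_simp)

lemma eqv_letters: "eqv n u v \<Longrightarrow> set u \<subseteq> letters n \<and> set v \<subseteq> letters n"
  by (induction rule: eqv.induct) (auto dest: relators_letters)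

lemma eqv_app_right: "eqv n u v \<Longrightarrow> set x \<subseteq> letters n \<Longrightarrow> eqv n (u @ x) (v @ x)"
proof (induction rule: eqv.induct)
  case (refl w) then show ?case by (intro eqv.refl) auto
next
  case (sym u v) then show ?case by (auto intro: eqv.sym)
next
  case (trans u v w) then show ?case by (auto intro: eqv.trans)
next
  case (cancel u v x') then show ?case using eqv.cancel[of u n "v @ x" x'] by simp
next
  case (relator u v r) then show ?case using eqv.relator[of u n "v @ x" r] by simp
qed

lemma eqv_app_left: "eqv n u v \<Longrightarrow> set x \<subseteq> letters n \<Longrightarrow> eqv n (x @ u) (x @ v)"
proof (induction rule: eqv.induct)
  case (refl w) then show ?case by (intro eqv.refl) auto
next
  case (sym u v) then show ?case by (auto intro: eqv.sym)
next
  case (trans u v w) then show ?case by (auto intro: eqv.trans)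
next
  case (cancel u v x') then show ?case using eqv.cancel[of "x @ u" n v x'] by simp
next
  case (relator u v r) then show ?case using eqv.relator[of "x @ u" n v r] by simp
qed

lemma eqv_app: "eqv n u v \<Longrightarrow> eqv n u' v' \<Longrightarrow> eqv n (u @ u') (v @ v')"
  by (meson eqv.trans eqv_app_left eqv_app_right eqv_letters)

lemma eqv_inv_right: "set u \<subseteq> letters n \<Longrightarrow> eqv n (u @ inv_word u) []"
proof (induction u)
  case Nil then show ?case by (auto simp: inv_word_def intro: eqv.refl)
next
  case (Cons x u)
  have "eqv n ([x] @ (u @ inv_word u) @ [inv_letter x]) ([x] @ [] @ [inv_letter x])"
    using Cons by (intro eqv_app eqv.refl) auto
  moreover have "eqv n ([] @ [x, inv_letter x] @ []) ([] @ [])"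
    using Cons by (intro eqv.cancel) auto
  ultimately show ?case by (auto simp: inv_word_def intro: eqv.trans)
qed

lemma eqv_inv_left: "set u \<subseteq> letters n \<Longrightarrow> eqv n (inv_word u @ u) []"
  using eqv_inv_right[of "inv_word u" n] by simp

lemma cls_eq: "eqv n u v \<Longrightarrow> cls n u = cls n v"
  unfolding cls_def by (auto intro: eqv.trans eqv.sym)

lemma cls_mem: "set u \<subseteq> letters n \<Longrightarrow> u \<in> cls n u"
  by (simp add: cls_def eqv.refl)

lemma cls_mult: "set u \<subseteq> letters n \<Longrightarrow> set v \<subseteq> letters n \<Longrightarrow>
   cls n u \<otimes>\<^bsub>TVB n\<^esub> cls n v = cls n (u @ v)"
  unfolding TVB_def cls_def
  by (auto intro: eqv.refl eqv.trans eqv_app)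

lemma carrier_TVB: "carrier (TVB n) = {cls n w | w. set w \<subseteq> letters n}"
  by (simp add: TVB_def)

lemma cls_carrier[intro]: "set w \<subseteq> letters n \<Longrightarrow> cls n w \<in> carrier (TVB n)"
  by (auto simp: carrier_TVB)

lemma one_TVB: "\<one>\<^bsub>TVB n\<^esub> = cls n []"
  by (simp add: TVB_def)

lemma TVB_group: "group (TVB n)"
proof (rule groupI)
  fix x y assume "x \<in> carrier (TVB n)" "y \<in> carrier (TVB n)"
  then obtain u v where "x = cls n u" "set u \<subseteq> letters n" "y = cls n v" "set v \<subseteq> letters n"
    by (auto simp: carrier_TVB)
  then show "x \<otimes>\<^bsub>TVB n\<^esub> y \<in> carrier (TVB n)"
    using cls_carrier[of "u@v" n] by (simp add: cls_mult)
next
  show "\<one>\<^bsub>TVB n\<^esub> \<in> carrier (TVB n)" by (auto simp: carrier_TVB one_TVB)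
next
  fix x y z assume "x \<in> carrier (TVB n)" "y \<in> carrier (TVB n)" "z \<in> carrier (TVB n)"
  then show "x \<otimes>\<^bsub>TVB n\<^esub> y \<otimes>\<^bsub>TVB n\<^esub> z = x \<otimes>\<^bsub>TVB n\<^esub> (y \<otimes>\<^bsub>TVB n\<^esub> z)"
    by (auto simp: carrier_TVB cls_mult)
next
  fix x assume "x \<in> carrier (TVB n)"
  then show "\<one>\<^bsub>TVB n\<^esub> \<otimes>\<^bsub>TVB n\<^esub> x = x"
    by (auto simp: carrier_TVB cls_mult one_TVB)
next
  fix x assume "x \<in> carrier (TVB n)"
  then obtain u where u: "x = cls n u" "set u \<subseteq> letters n" by (auto simp: carrier_TVB)
  moreover have iu: "set (inv_word u) \<subseteq> letters n" using u by simp
  moreover have "cls n (inv_word u) \<otimes>\<^bsub>TVB n\<^esub> cls n u = \<one>\<^bsub>TVB n\<^esub>"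
    using u iu by (simp add: cls_mult one_TVB eqv_inv_left cls_eq)
  ultimately show "\<exists>y\<in>carrier (TVB n). y \<otimes>\<^bsub>TVB n\<^esub> x = \<one>\<^bsub>TVB n\<^esub>"
    using cls_carrier[OF iu] by blast
qed

lemma inv_TVB: "set u \<subseteq> letters n \<Longrightarrow> inv\<^bsub>TVB n\<^esub> (cls n u) = cls n (inv_word u)"
proof -
  assume u: "set u \<subseteq> letters n"
  interpret group "TVB n" by (rule TVB_group)
  have iu: "set (inv_word u) \<subseteq> letters n" using u by simp
  have "cls n (inv_word u) \<otimes>\<^bsub>TVB n\<^esub> cls n u = \<one>\<^bsub>TVB n\<^esub>"
    using u iu by (simp add: cls_mult one_TVB eqv_inv_left cls_eq)
  moreover have "cls n u \<in> carrier (TVB n)" "cls n (inv_word u) \<in> carrier (TVB n)"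
    using u iu by (auto intro!: cls_carrier simp del: inv_word_letters)
  ultimately show ?thesis using inv_equality by blast
qed



type_synonym mdl = "(nat \<Rightarrow> nat) \<times> (nat \<Rightarrow> bool)"

definition mm :: "mdl \<Rightarrow> mdl \<Rightarrow> mdl" where
  "mm a b = (fst a \<circ> fst b, \<lambda>k. snd a (fst b k) \<noteq> snd b k)"

definition mu :: mdl where "mu = (id, \<lambda>_. False)"

fun lval :: "letter \<Rightarrow> mdl" where
  "lval (b, Sg i) = (transp i, \<lambda>_. False)"
| "lval (b, Rh i) = (transp i, \<lambda>_. False)"
| "lval (b, Ga j) = (id, \<lambda>k. k = j)"

definition ev :: "word \<Rightarrow> mdl" where
  "ev w = foldr (\<lambda>x acc. mm (lval x) acc) w mu"

lemma ev_Nil[simp]: "ev [] = mu" and ev_Cons[simp]: "ev (x # w) = mm (lval x) (ev w)"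
  by (simp_all add: ev_def)

lemma mm_assoc: "mm (mm a b) c = mm a (mm b c)"
  by (auto simp: mm_def)

lemma mm_mu[simp]: "mm a mu = a" "mm mu a = a"
  by (auto simp: mm_def mu_def)

lemma ev_append: "ev (u @ v) = mm (ev u) (ev v)"
  by (induction u) (auto simp: mm_assoc)

lemma transp_transp[simp]: "transp i (transp i k) = k"
  by (simp add: transp_def)

lemma lval_inv[simp]: "lval (inv_letter x) = lval x"
  by (cases x; cases "snd x") (auto simp: inv_letter_def)

lemma lval_sq: "mm (lval x) (lval x) = mu"
  by (cases x; cases "snd x") (auto simp: mm_def mu_def)

lemma ev_cancel: "ev [x, inv_letter x] = mu"
  by (simp add: lval_sq)

lemma ev_inv_right: "ev (v @ inv_word v) = mu"
proof (induction v)
  case Nil then show ?case by (simp add: inv_word_def)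
next
  case (Cons x v)
  have "ev ((x # v) @ inv_word (x # v)) = mm (lval x) (mm (ev (v @ inv_word v)) (lval x))"
    by (simp add: inv_word_def ev_append mm_assoc)
  also have "\<dots> = mu" using Cons by (simp add: lval_sq)
  finally show ?case .
qed

lemma ev_rel: "ev u = ev v \<Longrightarrow> ev (rel u v) = mu"
  by (metis ev_append ev_inv_right rel_def)

lemma ev_relators: "r \<in> relators n \<Longrightarrow> ev r = mu"
  unfolding relators_def
  apply (elim UnE; clarify; rule ev_rel)
  apply (auto simp: pos_def mm_def fun_eq_iff transp_def mu_def)
  done

lemma ev_eqv: "eqv n u v \<Longrightarrow> ev u = ev v"
proof (induction rule: eqv.induct)
  case (cancel u v x) then show ?case by (simp add: ev_append lval_sq flip: mm_assoc)
next
  case (relator u v r) then show ?case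
    using ev_relators[of r n] by (simp add: ev_append)
qed auto

lemma fst_ev: "fst (ev w) = perm_word w"
proof (induction w)
  case Nil then show ?case by (simp add: perm_word_def mu_def)
next
  case (Cons x w)
  then show ?case
    by (cases x; cases "snd x") (auto simp: perm_word_def mm_def)
qed



lemma cls_nonempty_eqv: "set w \<subseteq> letters n \<Longrightarrow> eqv n w (SOME x. x \<in> cls n w)"
proof -
  assume "set w \<subseteq> letters n"
  then have "w \<in> cls n w" by (rule cls_mem)
  then have "(SOME x. x \<in> cls n w) \<in> cls n w" by (rule someI)
  then show ?thesis by (simp add: cls_def)
qed

lemma ev_SOME: "set w \<subseteq> letters n \<Longrightarrow> ev (SOME x. x \<in> cls n w) = ev w"
  using cls_nonempty_eqv ev_eqv by metis

lemma phiP_cls: "set w \<subseteq> letters n \<Longrightarrow> phiP n (cls n w) = perm_word w"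
  unfolding phiP_def by (metis ev_SOME fst_ev)

lemma transp_eq: "transp i = Transposition.transpose i (i+1)"
  by (auto simp: transp_def Transposition.transpose_def fun_eq_iff)

lemma perm_word_permutes: "set w \<subseteq> letters n \<Longrightarrow> perm_word w permutes {1..n}"
proof (induction w)
  case Nil then show ?case using permutes_id[of "{1..n}"] by (simp add: perm_word_def id_def)
next
  case (Cons x w)
  have pw: "perm_word (x # w) = perm_letter x \<circ> perm_word w" by (simp add: perm_word_def)
  have px: "perm_letter x permutes {1..n}"
    using Cons.prems
    by (cases x; cases "snd x")
       (auto simp: letters_def transp_eq intro!: permutes_swap_id)
  have "perm_word w permutes {1..n}" using Cons by simp
  then show ?case unfolding pw by (rule permutes_compose[OF _ px])
qed

lemma perm_word_append: "perm_word (u @ v) = perm_word u \<circ> perm_word v"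
  by (simp add: ev_append mm_def flip: fst_ev)

lemma phiP_hom: "phiP n \<in> hom (TVB n) (sym_group n)"
proof (rule homI)
  fix x assume "x \<in> carrier (TVB n)"
  then obtain w where "x = cls n w" "set w \<subseteq> letters n" by (auto simp: carrier_TVB)
  then show "phiP n x \<in> carrier (sym_group n)"
    using perm_word_permutes[of w n] by (simp add: phiP_cls sym_group_def)
next
  fix x y assume "x \<in> carrier (TVB n)" "y \<in> carrier (TVB n)"
  then obtain u v where "x = cls n u" "set u \<subseteq> letters n" "y = cls n v" "set v \<subseteq> letters n"
    by (auto simp: carrier_TVB)
  then show "phiP n (x \<otimes>\<^bsub>TVB n\<^esub> y) = phiP n x \<otimes>\<^bsub>sym_group n\<^esub> phiP n y"
    by (simp add: cls_mult phiP_cls sym_group_def perm_word_append)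
qed

lemma phiP_group_hom: "group_hom (TVB n) (sym_group n) (phiP n)"
  by (simp add: group_hom_def group_hom_axioms_def TVB_group sym_group_is_group phiP_hom)

lemma TVP_subgroup: "subgroup (TVP n) (TVB n)"
  unfolding TVP_def by (rule group_hom.subgroup_kernel[OF phiP_group_hom])

lemma TVP_mem: "x \<in> TVP n \<longleftrightarrow> (\<exists>w. x = cls n w \<and> set w \<subseteq> letters n \<and> perm_word w = id)"
  by (auto simp: TVP_def kernel_def carrier_TVB phiP_cls sym_group_def)

definition gaw :: "nat \<Rightarrow> word \<Rightarrow> bool" where
  "gaw n w \<longleftrightarrow> set w \<subseteq> letters n \<and> (\<forall>x\<in>set w. \<exists>j. snd x = Ga j)"

lemma gam_carrier: "1 \<le> j \<Longrightarrow> j \<le> n \<Longrightarrow> gam n j \<in> carrier (TVB n)"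
  unfolding gam_def by (rule cls_carrier) (auto simp: pos_def letters_def)

lemma A_char: "A n = {cls n w | w. gaw n w}"
proof
  show "A n \<subseteq> {cls n w | w. gaw n w}"
    unfolding A_def
  proof
    fix x assume "x \<in> generate (TVB n) {gam n j |j. 1 \<le> j \<and> j \<le> n}"
    then show "x \<in> {cls n w | w. gaw n w}"
    proof (induction)
      case one then show ?case by (auto simp: one_TVB gaw_def intro!: exI[of _ "[]"])
    next
      case (incl h) then show ?case
        by (auto simp: gam_def gaw_def pos_def letters_def)
    next
      case (inv h)
      then obtain j where j: "h = gam n j" "1 \<le> j" "j \<le> n" by auto
      have "inv\<^bsub>TVB n\<^esub> h = cls n [(False, Ga j)]"
        using j by (simp add: gam_def inv_TVB pos_def letters_def inv_word_def inv_letter_def)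
      then show ?case using j by (auto simp: gaw_def letters_def)
    next
      case (eng h1 h2)
      then obtain u v where "h1 = cls n u" "gaw n u" "h2 = cls n v" "gaw n v" by auto
      then show ?case
        by (intro CollectI exI[of _ "u @ v"]) (auto simp: gaw_def cls_mult)
    qed
  qed
next
  show "{cls n w | w. gaw n w} \<subseteq> A n"
  proof clarify
    fix w assume "gaw n w"
    then show "cls n w \<in> A n"
    proof (induction w)
      case Nil then show ?case using generate.one[of "TVB n"] by (simp add: A_def one_TVB)
    next
      case (Cons x w)
      then obtain b j where x: "x = (b, Ga j)" "1 \<le> j" "j \<le> n"
        by (cases x) (auto simp: gaw_def letters_def)
      have w: "gaw n w" "set w \<subseteq> letters n" using Cons.prems by (auto simp: gaw_def)
      have "cls n [x] \<in> A n"
      proof (cases b)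
        case True then show ?thesis using x
          by (auto simp: A_def gam_def pos_def intro!: generate.incl)
      next
        case False
        have "cls n [x] = inv\<^bsub>TVB n\<^esub> (gam n j)"
          using x False by (simp add: gam_def inv_TVB pos_def letters_def inv_word_def inv_letter_def)
        then show ?thesis using x by (auto simp: A_def intro!: generate.inv)
      qed
      moreover have "cls n (x # w) = cls n [x] \<otimes>\<^bsub>TVB n\<^esub> cls n w"
        using x w by (simp add: cls_mult letters_def)
      ultimately show ?case using Cons.IH[OF w(1)] by (simp add: A_def generate.eng)
    qed
  qed
qed

lemma A_subgroup: "subgroup (A n) (TVB n)"
  unfolding A_def
  by (rule group.generate_is_subgroup[OF TVB_group]) (auto intro: gam_carrier)

lemma ev_gaw: "gaw n w \<Longrightarrow> fst (ev w) = id"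
  by (induction w) (auto simp: gaw_def mm_def mu_def)

lemma A_sub_TVP: "A n \<subseteq> TVP n"
proof
  fix x assume "x \<in> A n"
  then obtain w where "x = cls n w" "gaw n w" by (auto simp: A_char)
  then show "x \<in> TVP n" unfolding TVP_mem
    by (intro exI[of _ w]) (auto simp: gaw_def ev_gaw simp flip: fst_ev)
qed



lemma rel_eqv:
  assumes "rel u v \<in> relators n" "set u \<subseteq> letters n" "set v \<subseteq> letters n"
  shows "eqv n u v"
proof -
  have 1: "eqv n ([] @ rel u v @ v) ([] @ v)"
    using assms by (intro eqv.relator) auto
  have 2: "eqv n (u @ (inv_word v @ v)) (u @ [])"
    using assms by (intro eqv_app_left eqv_inv_left) auto
  from 1 2 show ?thesis
    by (auto simp: rel_def intro: eqv.trans eqv.sym)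
qed

lemma ga_comm: "1 \<le> i \<Longrightarrow> i \<le> n \<Longrightarrow> 1 \<le> j \<Longrightarrow> j \<le> n \<Longrightarrow>
  eqv n [(True, Ga i), (True, Ga j)] [(True, Ga j), (True, Ga i)]"
proof -
  assume a: "1 \<le> i" "i \<le> n" "1 \<le> j" "j \<le> n"
  have "rel (map pos [Ga i, Ga j]) (map pos [Ga j, Ga i]) \<in> relators n"
    unfolding relators_def apply (rule UnI1, rule UnI1, rule UnI1, rule UnI1, rule UnI2) using a by blast
  then show ?thesis using a by (intro rel_eqv) (auto simp: pos_def letters_def)
qed

lemma ga_sq: "1 \<le> j \<Longrightarrow> j \<le> n \<Longrightarrow> eqv n [(True, Ga j), (True, Ga j)] []"
proof -
  assume a: "1 \<le> j" "j \<le> n"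
  have "rel (map pos [Ga j, Ga j]) [] \<in> relators n"
    unfolding relators_def apply (rule UnI1, rule UnI1, rule UnI1, rule UnI1, rule UnI1, rule UnI2) using a by blast
  then show ?thesis using a by (intro rel_eqv) (auto simp: pos_def letters_def)
qed

lemma ga_neg: "1 \<le> j \<Longrightarrow> j \<le> n \<Longrightarrow> eqv n [(b, Ga j)] [(True, Ga j)]"
proof (cases b)
  case True
  assume "1 \<le> j" "j \<le> n"
  then show ?thesis using True eqv.refl[of "[(True, Ga j)]" n] by (simp add: letters_def)
next
  case False
  assume a: "1 \<le> j" "j \<le> n"
  have 1: "eqv n ([(False, Ga j)] @ [(True, Ga j), (True, Ga j)]) ([(False, Ga j)] @ [])"
    using a by (intro eqv_app_left ga_sq) (auto simp: letters_def)
  have 2: "eqv n ([] @ [(False, Ga j), inv_letter (False, Ga j)] @ [(True, Ga j)]) ([] @ [(True, Ga j)])"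
    using a by (intro eqv.cancel) (auto simp: letters_def)
  from 1 2 show ?thesis using False by (auto simp: inv_letter_def intro: eqv.trans eqv.sym)
qed

definition gmap :: "nat list \<Rightarrow> word" where
  "gmap L = map (\<lambda>j. (True, Ga j)) L"

lemma gmap_letters: "set L \<subseteq> {1..n} \<Longrightarrow> set (gmap L) \<subseteq> letters n"
  by (auto simp: gmap_def letters_def)

lemma comm_list: "set L \<subseteq> {1..n} \<Longrightarrow> 1 \<le> j \<Longrightarrow> j \<le> n \<Longrightarrow>
   eqv n ((True, Ga j) # gmap L) (gmap L @ [(True, Ga j)])"
proof (induction L)
  case Nil then show ?case using eqv.refl[of "[(True, Ga j)]" n] by (simp add: gmap_def letters_def)
next
  case (Cons l L)
  have 1: "eqv n ([(True, Ga j), (True, Ga l)] @ gmap L) ([(True, Ga l), (True, Ga j)] @ gmap L)"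
    using Cons.prems by (intro eqv_app_right ga_comm gmap_letters) auto
  have 2: "eqv n ([(True, Ga l)] @ ((True, Ga j) # gmap L)) ([(True, Ga l)] @ (gmap L @ [(True, Ga j)]))"
    using Cons by (intro eqv_app_left) (auto simp: letters_def)
  from 1 2 show ?case by (auto simp: gmap_def intro: eqv.trans)
qed

definition gword :: "nat \<Rightarrow> (nat \<Rightarrow> bool) \<Rightarrow> word" where
  "gword n V = gmap (filter V [1..<n+1])"

lemma gword_letters: "set (gword n V) \<subseteq> letters n"
  unfolding gword_def by (rule gmap_letters) auto

lemma gword_gaw: "gaw n (gword n V)"
  using gword_letters by (auto simp: gaw_def gword_def gmap_def)

lemma gword_cong: "(\<And>k. 1 \<le> k \<Longrightarrow> k \<le> n \<Longrightarrow> V k = W k) \<Longrightarrow> gword n V = gword n W"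
  unfolding gword_def by (auto intro!: arg_cong[where f=gmap] filter_cong)

lemma gword_split: "1 \<le> j \<Longrightarrow> j \<le> n \<Longrightarrow>
  gword n V = gmap (filter V [1..<j]) @ (if V j then [(True, Ga j)] else []) @ gmap (filter V [j+1..<n+1])"
proof -
  assume a: "1 \<le> j" "j \<le> n"
  have "[1..<n+1] = [1..<j] @ [j..<n+1]" using a upt_add_eq_append[of 1 j "n+1-j"] by simp
  moreover have "[j..<n+1] = j # [j+1..<n+1]" using a upt_conv_Cons[of j "n+1"] by simp
  ultimately have "[1..<n+1] = [1..<j] @ j # [j+1..<n+1]" by simp
  then show ?thesis by (simp add: gword_def gmap_def del: upt_Suc)
qed

lemma insert_gword: "1 \<le> j \<Longrightarrow> j \<le> n \<Longrightarrow>
  eqv n ((True, Ga j) # gword n V) (gword n (\<lambda>k. (k = j) \<noteq> V k))"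
proof -
  assume a: "1 \<le> j" "j \<le> n"
  define W where "W = (\<lambda>k. (k = j) \<noteq> V k)"
  define L where "L = gmap (filter V [1..<j])"
  define R where "R = gmap (filter V [j+1..<n+1])"
  have LW: "gmap (filter W [1..<j]) = L" unfolding W_def L_def
    by (auto intro!: arg_cong[where f=gmap] filter_cong)
  have RW: "gmap (filter W [j+1..<n+1]) = R" unfolding W_def R_def
    by (auto intro!: arg_cong[where f=gmap] filter_cong)
  have gW: "gword n W = L @ (if W j then [(True, Ga j)] else []) @ R"
    using gword_split[OF a, of W] LW RW by simp
  have gV: "gword n V = L @ (if V j then [(True, Ga j)] else []) @ R"
    using gword_split[OF a, of V] L_def R_def by simp
  have Ll: "set L \<subseteq> letters n" "set R \<subseteq> letters n"
    unfolding L_def R_def using a by (auto intro!: gmap_letters)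
  define M where "M = (if V j then [(True, Ga j)] else [])"
  have Ml: "set M \<subseteq> letters n" using a by (auto simp: letters_def M_def)
  have gl: "set [(True, Ga j)] \<subseteq> letters n" using a by (auto simp: letters_def)
  have 1: "eqv n (((True, Ga j) # L) @ (M @ R)) ((L @ [(True, Ga j)]) @ (M @ R))"
    using a Ll Ml unfolding L_def by (intro eqv_app_right comm_list) auto
  have 2: "eqv n (L @ ((True, Ga j) # M) @ R) (gword n W)"
  proof (cases "V j")
    case True
    have "eqv n (L @ [(True, Ga j), (True, Ga j)] @ R) (L @ [] @ R)"
      using a Ll by (intro eqv_app eqv.refl ga_sq) auto
    then show ?thesis using True gW by (simp add: W_def M_def)
  next
    case False
    have "set (L @ [(True, Ga j)] @ R) \<subseteq> letters n" using Ll gl by simp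
    from eqv.refl[OF this] show ?thesis using False gW by (simp add: W_def M_def)
  qed
  from 1 2 show ?thesis using gV unfolding W_def M_def by (auto intro: eqv.trans)
qed

lemma norm_gaw: "gaw n w \<Longrightarrow> eqv n w (gword n (snd (ev w)))"
proof (induction w)
  case Nil
  have "gword n (snd (ev [])) = []" by (simp add: gword_def gmap_def mu_def del: upt_Suc)
  then show ?case using eqv.refl[of "[]" n] by simp
next
  case (Cons x w)
  have xl: "x \<in> letters n" and "\<exists>j. snd x = Ga j" using Cons.prems by (auto simp: gaw_def)
  then obtain j where j: "snd x = Ga j" by blast
  obtain b where x: "x = (b, Ga j)" using j by (cases x) simp
  have jr: "1 \<le> j" "j \<le> n" using xl x by (auto simp: letters_def)
  have w: "gaw n w" using Cons.prems by (simp add: gaw_def)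
  have 1: "eqv n ((b, Ga j) # w) ((True, Ga j) # gword n (snd (ev w)))"
    using eqv_app[OF ga_neg[OF jr] Cons.IH[OF w]] by simp
  have 2: "eqv n ((True, Ga j) # gword n (snd (ev w))) (gword n (\<lambda>k. (k = j) \<noteq> snd (ev w) k))"
    by (rule insert_gword[OF jr])
  have 3: "snd (ev (x # w)) = (\<lambda>k. (k = j) \<noteq> snd (ev w) k)"
    using x ev_gaw[OF w] by (simp add: mm_def)
  have "eqv n (x # w) (gword n (\<lambda>k. (k = j) \<noteq> snd (ev w) k))"
    using eqv.trans[OF 1 2] x by simp
  then show ?case using 3 by simp
qed




definition psi :: "nat \<Rightarrow> word set \<Rightarrow> word set" where
  "psi n c = cls n (gword n (snd (ev (SOME w. w \<in> c))))"

lemma psi_cls: "set w \<subseteq> letters n \<Longrightarrow> psi n (cls n w) = cls n (gword n (snd (ev w)))"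
  by (simp add: psi_def ev_SOME)

lemma psi_A: "a \<in> A n \<Longrightarrow> psi n a = a"
proof -
  assume "a \<in> A n"
  then obtain w where w: "a = cls n w" "gaw n w" by (auto simp: A_char)
  then have wl: "set w \<subseteq> letters n" by (simp add: gaw_def)
  have "psi n a = cls n (gword n (snd (ev w)))" unfolding w(1) by (rule psi_cls[OF wl])
  also have "\<dots> = cls n w" by (rule cls_eq[OF norm_gaw[OF w(2)], symmetric])
  finally show ?thesis using w(1) by simp
qed

lemma psi_in_A: "set w \<subseteq> letters n \<Longrightarrow> psi n (cls n w) \<in> A n"
  by (auto simp: psi_cls A_char intro!: gword_gaw)


lemma fst_ev_gmap: "fst (ev (gmap L)) = id"
  by (induction L) (simp_all add: gmap_def mm_def mu_def)

lemma snd_ev_gmap: "distinct L \<Longrightarrow> snd (ev (gmap L)) = (\<lambda>k. k \<in> set L)"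
proof (induction L)
  case Nil then show ?case by (simp add: gmap_def mu_def)
next
  case (Cons a L)
  have "snd (ev (gmap (a # L))) = (\<lambda>k. (k = a) \<noteq> snd (ev (gmap L)) k)"
    using fst_ev_gmap[of L] by (simp add: gmap_def mm_def)
  then show ?case using Cons by (auto simp: fun_eq_iff)
qed


lemma snd_ev_gword: "1 \<le> k \<Longrightarrow> k \<le> n \<Longrightarrow> snd (ev (gword n V)) k = V k"
proof -
  assume a: "1 \<le> k" "k \<le> n"
  have d: "distinct (filter V [1..<n+1])" by (rule distinct_filter) (rule distinct_upt)
  have "snd (ev (gword n V)) k = (k \<in> set (filter V [1..<n+1]))"
    by (simp only: gword_def snd_ev_gmap[OF d])
  also have "\<dots> = V k" using a by (simp del: upt_Suc)
  finally show ?thesis .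
qed

lemma gaw_append: "gaw n u \<Longrightarrow> gaw n v \<Longrightarrow> gaw n (u @ v)"
  unfolding gaw_def by (metis Un_iff Un_subset_iff set_append)

lemma psi_mult:
  assumes x: "x \<in> TVP n" and y: "y \<in> TVP n"
  shows "psi n (x \<otimes>\<^bsub>TVB n\<^esub> y) = psi n x \<otimes>\<^bsub>TVB n\<^esub> psi n y"
proof -
  obtain u where u: "x = cls n u" "set u \<subseteq> letters n" using x by (auto simp: TVP_mem)
  obtain v where v: "y = cls n v" "set v \<subseteq> letters n" "perm_word v = id" using y by (auto simp: TVP_mem)
  define Vu where "Vu = snd (ev u)"
  define Vv where "Vv = snd (ev v)"
  have "snd (ev (u @ v)) = (\<lambda>k. Vu k \<noteq> Vv k)"
    using v(3) by (simp add: ev_append mm_def Vu_def Vv_def flip: fst_ev)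
  then have L: "psi n (x \<otimes>\<^bsub>TVB n\<^esub> y) = cls n (gword n (\<lambda>k. Vu k \<noteq> Vv k))"
    using u v by (simp add: cls_mult psi_cls)
  have g: "gaw n (gword n Vu @ gword n Vv)" by (intro gaw_append gword_gaw)
  have R: "psi n x \<otimes>\<^bsub>TVB n\<^esub> psi n y = cls n (gword n Vu @ gword n Vv)"
    using u v gword_letters by (simp add: psi_cls cls_mult Vu_def Vv_def)
  also have "\<dots> = cls n (gword n (snd (ev (gword n Vu @ gword n Vv))))"
    by (rule cls_eq[OF norm_gaw[OF g]])
  also have "gword n (snd (ev (gword n Vu @ gword n Vv))) = gword n (\<lambda>k. Vu k \<noteq> Vv k)"
    by (rule gword_cong) (simp add: ev_append mm_def ev_gaw[OF gword_gaw] snd_ev_gword)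
  finally show ?thesis using L by simp
qed


definition nog :: "word \<Rightarrow> bool" where
  "nog w \<longleftrightarrow> (\<forall>x\<in>set w. \<exists>i. snd x = Sg i \<or> snd x = Rh i)"

lemma nog_ev: "nog w \<Longrightarrow> snd (ev w) = (\<lambda>_. False)"
proof (induction w)
  case Nil then show ?case by (simp add: mu_def)
next
  case (Cons x w)
  then show ?case by (cases x) (auto simp: nog_def mm_def)
qed

lemma rho_desc_ok: "l \<le> n \<Longrightarrow> set (rho_desc k l) \<subseteq> letters n \<and> nog (rho_desc k l)"
  by (auto simp: rho_desc_def pos_def letters_def nog_def)

lemma nog_append: "nog (u @ v) \<longleftrightarrow> nog u \<and> nog v"
  by (auto simp: nog_def)

lemma nog_rev: "nog (rev u) \<longleftrightarrow> nog u"
  by (auto simp: nog_def)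

lemma lam_word_ok: "1 \<le> k \<Longrightarrow> k \<le> n \<Longrightarrow> 1 \<le> l \<Longrightarrow> l \<le> n \<Longrightarrow> k \<noteq> l \<Longrightarrow>
   set (lam_word k l) \<subseteq> letters n \<and> nog (lam_word k l)"
proof -
  assume a: "1 \<le> k" "k \<le> n" "1 \<le> l" "l \<le> n" "k \<noteq> l"
  show ?thesis
  proof (cases "k < l")
    case True
    have "set (lam_up k) \<subseteq> letters n \<and> nog (lam_up k)"
      using a True by (auto simp: lam_up_def letters_def nog_def)
    then show ?thesis using True rho_desc_ok[OF a(4), of k]
      by (simp add: lam_word_def nog_append nog_rev)
  next
    case False
    have "set (lam_down l) \<subseteq> letters n \<and> nog (lam_down l)"
      using a False by (auto simp: lam_down_def lam_up_def pos_def letters_def nog_def)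
    then show ?thesis using False rho_desc_ok[OF a(2), of l]
      by (simp add: lam_word_def nog_append nog_rev)
  qed
qed

lemma psi_lam: "1 \<le> k \<Longrightarrow> k \<le> n \<Longrightarrow> 1 \<le> l \<Longrightarrow> l \<le> n \<Longrightarrow> k \<noteq> l \<Longrightarrow>
   psi n (lam n k l) = \<one>\<^bsub>TVB n\<^esub>"
  using lam_word_ok[of k n l]
  by (simp add: lam_def psi_cls nog_ev one_TVB gword_def gmap_def del: upt_Suc)



theorem mainTheorem5:
  fixes n :: nat
  assumes "n \<ge> 2"
  shows "\<exists>\<psi>. \<psi> \<in> hom ((TVB n)\<lparr>carrier := TVP n\<rparr>) ((TVB n)\<lparr>carrier := A n\<rparr>)
          \<and> \<psi> ` TVP n = A n
          \<and> (\<forall>k \<in> {1..n}. \<forall>l \<in> {1..n}. k \<noteq> l \<longrightarrow> \<psi> (lam n k l) = \<one>\<^bsub>TVB n\<^esub>)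
          \<and> (\<forall>j \<in> {1..n}. \<psi> (gam n j) = gam n j)
          \<and> (\<forall>a \<in> A n. \<psi> a = a)
          \<and> (let PL = kernel ((TVB n)\<lparr>carrier := TVP n\<rparr>) ((TVB n)\<lparr>carrier := A n\<rparr>) \<psi>
             in PL \<lhd> (TVB n)\<lparr>carrier := TVP n\<rparr>
                \<and> subgroup (A n) ((TVB n)\<lparr>carrier := TVP n\<rparr>)
                \<and> PL \<inter> A n = {\<one>\<^bsub>TVB n\<^esub>}
                \<and> PL <#>\<^bsub>TVB n\<^esub> A n = TVP n)"
proof -
  let ?G = "TVB n"
  let ?H = "(TVB n)\<lparr>carrier := TVP n\<rparr>"
  let ?K = "(TVB n)\<lparr>carrier := A n\<rparr>"
  interpret G: group ?G by (rule TVB_group)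
  have sT: "subgroup (TVP n) ?G" by (rule TVP_subgroup)
  have sA: "subgroup (A n) ?G" by (rule A_subgroup)
  have AT: "A n \<subseteq> TVP n" by (rule A_sub_TVP)
  have gH: "group ?H" by (rule G.subgroup_imp_group[OF sT])
  have gK: "group ?K" by (rule G.subgroup_imp_group[OF sA])
  have inA: "psi n x \<in> A n" if "x \<in> TVP n" for x
    using that by (auto simp: TVP_mem intro!: psi_in_A)
  have hom: "psi n \<in> hom ?H ?K"
    by (rule homI) (auto simp: inA psi_mult)
  have gh: "group_hom ?H ?K (psi n)"
    using gH gK hom by (simp add: group_hom_def group_hom_axioms_def)
  have img: "psi n ` TVP n = A n"
  proof
    show "psi n ` TVP n \<subseteq> A n" using inA by auto
    show "A n \<subseteq> psi n ` TVP n"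
    proof
      fix a assume "a \<in> A n"
      then have "a = psi n a" "a \<in> TVP n" using psi_A AT by auto
      then show "a \<in> psi n ` TVP n" by blast
    qed
  qed
  have lamp: "\<forall>k \<in> {1..n}. \<forall>l \<in> {1..n}. k \<noteq> l \<longrightarrow> psi n (lam n k l) = \<one>\<^bsub>TVB n\<^esub>"
  proof (intro ballI impI)
    fix k l assume "k \<in> {1..n}" "l \<in> {1..n}" "k \<noteq> l"
    then show "psi n (lam n k l) = \<one>\<^bsub>TVB n\<^esub>" by (intro psi_lam) auto
  qed
  have gamA: "gam n j \<in> A n" if "j \<in> {1..n}" for j
    using that unfolding A_def by (auto intro!: generate.incl)
  have gamp: "\<forall>j \<in> {1..n}. psi n (gam n j) = gam n j"
    using gamA psi_A by blast
  define PL where "PL = kernel ?H ?K (psi n)"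
  have PL_eq: "PL = {x \<in> TVP n. psi n x = \<one>\<^bsub>?G\<^esub>}"
    by (simp add: PL_def kernel_def)
  have nPL: "PL \<lhd> ?H" unfolding PL_def by (rule group_hom.normal_kernel[OF gh])
  have sAH: "subgroup (A n) ?H" by (rule G.subgroup_incl[OF sA sT AT])
  have one_A: "\<one>\<^bsub>?G\<^esub> \<in> A n" by (rule subgroup.one_closed[OF sA])
  have int: "PL \<inter> A n = {\<one>\<^bsub>?G\<^esub>}"
  proof
    show "PL \<inter> A n \<subseteq> {\<one>\<^bsub>?G\<^esub>}" using psi_A by (auto simp: PL_eq)
    show "{\<one>\<^bsub>?G\<^esub>} \<subseteq> PL \<inter> A n" using one_A AT psi_A[OF one_A] by (auto simp: PL_eq)
  qed
  have prod: "PL <#>\<^bsub>?G\<^esub> A n = TVP n"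
  proof
    show "PL <#>\<^bsub>?G\<^esub> A n \<subseteq> TVP n"
      using AT by (auto simp: set_mult_def PL_eq intro!: subgroup.m_closed[OF sT])
    show "TVP n \<subseteq> PL <#>\<^bsub>?G\<^esub> A n"
    proof
      fix x assume x: "x \<in> TVP n"
      define a where "a = psi n x"
      have aA: "a \<in> A n" using inA[OF x] by (simp add: a_def)
      have aT: "a \<in> TVP n" using aA AT by auto
      have ia: "inv\<^bsub>?G\<^esub> a \<in> A n" by (rule subgroup.m_inv_closed[OF sA aA])
      have iaT: "inv\<^bsub>?G\<^esub> a \<in> TVP n" using ia AT by auto
      have xc: "x \<in> carrier ?G" "a \<in> carrier ?G" using x aT subgroup.subset[OF sT] by auto
      define h where "h = x \<otimes>\<^bsub>?G\<^esub> inv\<^bsub>?G\<^esub> a"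
      have hT: "h \<in> TVP n" unfolding h_def by (rule subgroup.m_closed[OF sT x iaT])
      have "psi n h = a \<otimes>\<^bsub>?G\<^esub> inv\<^bsub>?G\<^esub> a"
        unfolding h_def using psi_mult[OF x iaT] psi_A[OF ia] a_def by simp
      also have "\<dots> = \<one>\<^bsub>?G\<^esub>" using xc by simp
      finally have hPL: "h \<in> PL" using hT by (simp add: PL_eq)
      have "h \<otimes>\<^bsub>?G\<^esub> a = x" unfolding h_def using xc by (simp add: G.m_assoc)
      then show "x \<in> PL <#>\<^bsub>?G\<^esub> A n" using hPL aA unfolding set_mult_def by blast
    qed
  qed
  show ?thesis
    apply (rule exI[of _ "psi n"])
    using hom img lamp gamp psi_A nPL sAH int prod
    by (simp add: PL_def Let_def)
qed

end
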